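(* Let $\Omega\subset\mathbb{C}$ be a domain, $D=(\mu,\mathcal{A},\mathcal{B},\mathcal{F})\in\mathcal{BV}(\Omega)$ with $\|\mu\|_\infty<1$, and suppose there is a $C^1$ diffeomorphism $\Phi:\Omega\to\Omega'$ onto a domain $\Omega'$ satisfying $\Phi_{\bar z}=\mu\,\Phi_z$ on $\Omega$. Let $\Psi:=\Phi^{-1}:\Omega'\to\Omega$, with coordinate $\zeta$ on $\Omega'$. Then $\Psi^*D=(\mu',\mathcal{A}',\mathcal{B}',\mathcal{F}')$ has $\mu'\equiv0$, i.e. it is the Vekua equation $w_{\bar\zeta}+\mathcal{A}'w+\mathcal{B}'\bar w=\mathcal{F}'$ on $\Omega'$, with \[ \mathcal{A}'=\overline{\Psi_\zeta}\,(\mathcal{A}\circ\Psi),\qquad \mathcal{B}'=\overline{\Psi_\zeta}\,(\mathcal{B}\circ\Psi),\qquad \mathcal{F}'=\overline{\Psi_\zeta}\,(\mathcal{F}\circ\Psi). \] In particular $D$ is diffeomorphism-equivalent to a classical Vekua equation.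
   Context: A domain is an open connected subset of $\mathbb{C}$. $\mathcal{BV}(\Omega)$ is the set of quadruples $(\mu,\mathcal{A},\mathcal{B},\mathcal{F})$ of continuous complex functions on $\Omega$ with $|\mu|<1$ pointwise; the associated equation is $w_{\bar z}-\mu w_z+\mathcal{A}w+\mathcal{B}\bar w=\mathcal{F}$. A diffeomorphism $\Phi:\Omega_1\to\Omega_2$ is a $C^1$ bijection with $C^1$ inverse and Jacobian $J=|\Phi_z|^2-|\Phi_{\bar z}|^2>0$. For $D\in\mathcal{BV}(\Omega_2)$ the pullback $\Phi^*D=(\mu^*,\mathcal{A}^*,\mathcal{B}^*,\mathcal{F}^* )$ is given, with $K:=\Phi_z+(\mu\circ\Phi)\overline{\Phi_{\bar z}}$, by $\mu^*=(\Phi_{\bar z}+(\mu\circ\Phi)\overline{\Phi_z})/K$, $\mathcal{A}^*=J(\mathcal{A}\circ\Phi)/K$, $\mathcal{B}^*=J(\mathcal{B}\circ\Phi)/K$, $\mathcal{F}^*=J(\mathcal{F}\circ\Phi)/K$; $D_1\sim_d D_2$ means $D_1=\Phi^*D_2$ for some diffeomorphism $\Phi$. *)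

theory Defs
  imports "HOL-Analysis.Analysis"
begin

definition wirt_z :: "(complex \<Rightarrow> complex) \<Rightarrow> complex \<Rightarrow> complex" where
  "wirt_z f z = (frechet_derivative f (at z) 1 - \<i> * frechet_derivative f (at z) \<i>) / 2"

definition wirt_zbar :: "(complex \<Rightarrow> complex) \<Rightarrow> complex \<Rightarrow> complex" where
  "wirt_zbar f z = (frechet_derivative f (at z) 1 + \<i> * frechet_derivative f (at z) \<i>) / 2"

definition is_domain :: "complex set \<Rightarrow> bool" where
  "is_domain S \<longleftrightarrow> open S \<and> connected S"

definition C1_on :: "complex set \<Rightarrow> (complex \<Rightarrow> complex) \<Rightarrow> bool" where
  "C1_on S f \<longleftrightarrow> (\<forall>z\<in>S. f differentiable (at z))
     \<and> continuous_on S (wirt_z f) \<and> continuous_on S (wirt_zbar f)"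

definition jacobian :: "(complex \<Rightarrow> complex) \<Rightarrow> complex \<Rightarrow> real" where
  "jacobian f z = (cmod (wirt_z f z))\<^sup>2 - (cmod (wirt_zbar f z))\<^sup>2"

definition diffeo :: "(complex \<Rightarrow> complex) \<Rightarrow> complex set \<Rightarrow> complex set \<Rightarrow> bool" where
  "diffeo \<Phi> S T \<longleftrightarrow> bij_betw \<Phi> S T \<and> C1_on S \<Phi> \<and> C1_on T (inv_into S \<Phi>)
     \<and> (\<forall>z\<in>S. jacobian \<Phi> z > 0)"

type_synonym bv_data =
  "(complex \<Rightarrow> complex) \<times> (complex \<Rightarrow> complex) \<times> (complex \<Rightarrow> complex) \<times> (complex \<Rightarrow> complex)"

definition BV :: "complex set \<Rightarrow> bv_data set" where
  "BV S = {(\<mu>, A, B, F). continuous_on S \<mu> \<and> continuous_on S A \<and> continuous_on S B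
            \<and> continuous_on S F \<and> (\<forall>z\<in>S. cmod (\<mu> z) < 1)}"

definition pullback :: "(complex \<Rightarrow> complex) \<Rightarrow> bv_data \<Rightarrow> bv_data" where
  "pullback \<Phi> D = (case D of (\<mu>, A, B, F) \<Rightarrow>
     let K = (\<lambda>z. wirt_z \<Phi> z + \<mu> (\<Phi> z) * cnj (wirt_zbar \<Phi> z)) in
     ((\<lambda>z. (wirt_zbar \<Phi> z + \<mu> (\<Phi> z) * cnj (wirt_z \<Phi> z)) / K z),
      (\<lambda>z. of_real (jacobian \<Phi> z) * A (\<Phi> z) / K z),
      (\<lambda>z. of_real (jacobian \<Phi> z) * B (\<Phi> z) / K z),
      (\<lambda>z. of_real (jacobian \<Phi> z) * F (\<Phi> z) / K z)))"

text \<open>Equality of data on a set (the data are only meaningful on the domain).\<close>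
definition data_eq_on :: "complex set \<Rightarrow> bv_data \<Rightarrow> bv_data \<Rightarrow> bool" where
  "data_eq_on S D1 D2 \<longleftrightarrow> (case D1 of (\<mu>1, A1, B1, F1) \<Rightarrow> case D2 of (\<mu>2, A2, B2, F2) \<Rightarrow>
     (\<forall>z\<in>S. \<mu>1 z = \<mu>2 z \<and> A1 z = A2 z \<and> B1 z = B2 z \<and> F1 z = F2 z))"

definition d_equiv :: "complex set \<Rightarrow> bv_data \<Rightarrow> complex set \<Rightarrow> bv_data \<Rightarrow> bool" where
  "d_equiv S1 D1 S2 D2 \<longleftrightarrow> (\<exists>\<Phi>. diffeo \<Phi> S1 S2 \<and> data_eq_on S1 D1 (pullback \<Phi> D2))"

end

theory Submission
  imports Defs
begin

lemma wirt_decomp: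
  assumes "f differentiable at z"
  shows "frechet_derivative f (at z) h = wirt_z f z * h + wirt_zbar f z * cnj h"
proof -
  let ?L = "frechet_derivative f (at z)"
  have lin: "linear ?L" using assms frechet_derivative_works has_derivative_linear by blast
  have h: "h = Re h *\<^sub>R 1 + Im h *\<^sub>R \<i>" by (simp add: complex_eq_iff)
  have "?L h = Re h *\<^sub>R ?L 1 + Im h *\<^sub>R ?L \<i>"
    by (subst h) (simp add: linear_add[OF lin] linear_scale[OF lin])
  also have "\<dots> = wirt_z f z * h + wirt_zbar f z * cnj h"
    unfolding wirt_z_def wirt_zbar_def
    by (subst (3 4) h) (simp add: scaleR_conv_of_real field_simps)
  finally show ?thesis .
qed

lemma C1_cong:
  assumes "open S" "\<And>z. z \<in> S \<Longrightarrow> f z = g z" "C1_on S f"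
  shows "C1_on S g"
proof -
  have d: "f differentiable at z" if "z \<in> S" for z using assms that unfolding C1_on_def by blast
  have fd: "frechet_derivative f (at z) = frechet_derivative g (at z)" if "z \<in> S" for z
    using frechet_derivative_transform_within_open[OF d[OF that] assms(1) that] assms(2) by blast
  have "g differentiable at z" if "z \<in> S" for z
    using d[OF that] assms(1,2) that unfolding differentiable_def
    using has_derivative_transform_within_open by blast
  moreover have "continuous_on S (wirt_z g)"
    using assms(3) unfolding C1_on_def
    by (metis (no_types, lifting) continuous_on_cong fd wirt_z_def)
  moreover have "continuous_on S (wirt_zbar g)"
    using assms(3) unfolding C1_on_def
    by (metis (no_types, lifting) continuous_on_cong fd wirt_zbar_def)
  ultimately show ?thesis unfolding C1_on_def by blast
qed

lemma inv_deriv: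
  assumes "open S" "z \<in> S" "f differentiable at z" "g differentiable at (f z)"
    "\<And>x. x \<in> S \<Longrightarrow> g (f x) = x"
  shows "frechet_derivative g (at (f z)) (frechet_derivative f (at z) h) = h"
proof -
  have "((g \<circ> f) has_derivative (frechet_derivative g (at (f z)) \<circ> frechet_derivative f (at z))) (at z)"
    by (rule diff_chain_at) (use assms(3,4) frechet_derivative_works in blast)+
  moreover have "((g \<circ> f) has_derivative id) (at z)"
    using has_derivative_transform_within_open[OF has_derivative_id[of "at z"] assms(1,2), of "g \<circ> f"]
      assms(5) by (simp add: id_def)
  ultimately have "frechet_derivative g (at (f z)) \<circ> frechet_derivative f (at z) = id"
    using has_derivative_unique by blast
  then show ?thesis unfolding fun_eq_iff comp_def id_def by (rule spec)
qed

lemma inv_wirt: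
  assumes "open S" "z \<in> S" "f differentiable at z" "g differentiable at (f z)"
    "\<And>x. x \<in> S \<Longrightarrow> g (f x) = x"
  shows "wirt_z g (f z) * wirt_z f z + wirt_zbar g (f z) * cnj (wirt_zbar f z) = 1"
    "wirt_z g (f z) * wirt_zbar f z + wirt_zbar g (f z) * cnj (wirt_z f z) = 0"
proof -
  define a where "a = wirt_z f z"
  define b where "b = wirt_zbar f z"
  define c where "c = wirt_z g (f z)"
  define d where "d = wirt_zbar g (f z)"
  have e: "c * (a * h + b * cnj h) + d * cnj (a * h + b * cnj h) = h" for h
    using inv_deriv[OF assms, of h] wirt_decomp[OF assms(3), of h] wirt_decomp[OF assms(4)]
    unfolding a_def b_def c_def d_def by simp
  have e1: "c * (a + b) + d * (cnj a + cnj b) = 1" using e[of 1] by simp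
  have "\<i> * (c * (a - b) - d * (cnj a - cnj b)) = \<i>" using e[of \<i>]
    by (simp add: algebra_simps)
  then have e2: "c * (a - b) - d * (cnj a - cnj b) = 1" by simp
  have "c * a + d * cnj b = ((c * (a + b) + d * (cnj a + cnj b)) + (c * (a - b) - d * (cnj a - cnj b))) / 2"
    by (simp add: field_simps)
  then show "c * a + d * cnj b = 1" using e1 e2 by simp
  have "c * b + d * cnj a = ((c * (a + b) + d * (cnj a + cnj b)) - (c * (a - b) - d * (cnj a - cnj b))) / 2"
    by (simp add: field_simps)
  then show "c * b + d * cnj a = 0" using e1 e2 by simp
qed

lemma solve_inv:
  fixes a b c d :: complex
  assumes e1: "c*a + d*cnj b = 1" and e2: "c*b + d*cnj a = 0"
    and J: "J = (cmod a)^2 - (cmod b)^2" "J > 0"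
  shows "c = cnj a / of_real J" "d = - b / of_real J"
proof -
  have JJ: "of_real J = a * cnj a - b * cnj b"
    unfolding J(1) of_real_diff complex_norm_square by (rule refl)
  have "c * (a * cnj a - b * cnj b) = cnj a * (c*a + d*cnj b) - cnj b * (c*b + d*cnj a)"
    by (simp add: algebra_simps)
  then have "c * of_real J = cnj a" using e1 e2 JJ by simp
  then show "c = cnj a / of_real J" using J(2) by (simp add: field_simps)
  have "d * (a * cnj a - b * cnj b) = a * (c*b + d*cnj a) - b * (c*a + d*cnj b)"
    by (simp add: algebra_simps)
  then have "d * of_real J = - b" using e1 e2 JJ by simp
  then show "d = - b / of_real J" using J(2) by (simp add: field_simps)
qed

lemma alg_main:
  fixes a m c d X :: complex and J :: real
  assumes J: "J = (cmod a)^2 - (cmod (m*a))^2" "J > 0"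
    and c: "c = cnj a / of_real J" and d: "d = - (m*a) / of_real J"
  shows "(d + m * cnj c) / (c + m * cnj d) = 0"
    and "(cmod c)^2 - (cmod d)^2 = 1 / J"
    and "of_real ((cmod c)^2 - (cmod d)^2) * X / (c + m * cnj d) = cnj c * X"
    and "(m*a + 0 * cnj a) / (a + 0 * cnj (m*a)) = m"
    and "of_real J * (cnj c * X) / (a + 0 * cnj (m * a)) = X"
proof -
  have Jc: "cnj (of_real J :: complex) = of_real J" by simp
  have J2: "J = (cmod a)^2 * (1 - (cmod m)^2)" using J(1) by (simp add: norm_mult power_mult_distrib algebra_simps)
  have a0: "a \<noteq> 0" using J by auto
  have r: "(cmod a)^2 > 0" using a0 by simp
  have s: "1 - (cmod m)^2 > 0" using J(2) J2 r by (simp add: zero_less_mult_iff)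
  have Jne: "(of_real J :: complex) \<noteq> 0" using J(2) by simp
  have cc: "cnj c = a / of_real J" using c by simp
  have cd: "cnj d = - (cnj m * cnj a) / of_real J" using d by simp
  have mm: "m * cnj m = of_real ((cmod m)^2)" by (rule complex_norm_square[symmetric])
  have mm2: "(complex_of_real (cmod m))^2 = m * cnj m" using complex_norm_square[of m] by simp
  have aa: "a * cnj a = of_real ((cmod a)^2)" by (rule complex_norm_square[symmetric])
  show "(d + m * cnj c) / (c + m * cnj d) = 0" using cc d by simp
  have nc: "(cmod c)^2 = (cmod a)^2 / J^2" using c J(2) by (simp add: norm_divide power_divide)
  have nd: "(cmod d)^2 = (cmod m)^2 * (cmod a)^2 / J^2" using d J(2) by (simp add: norm_divide norm_mult power_divide power_mult_distrib)
  have "(cmod a)^2 / J^2 - (cmod m)^2 * (cmod a)^2 / J^2 = ((cmod a)^2 - (cmod m)^2 * (cmod a)^2) / J^2"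
    by (simp add: diff_divide_distrib)
  also have "\<dots> = J / J^2" using J2 by (simp add: algebra_simps)
  also have "\<dots> = 1 / J" using J(2) by (simp add: power2_eq_square)
  finally show nn: "(cmod c)^2 - (cmod d)^2 = 1 / J" unfolding nc nd .
  have K: "c + m * cnj d = cnj a * of_real (1 - (cmod m)^2) / of_real J"
    unfolding c cd using Jne by (simp add: field_simps mm2)
  have cna: "cnj a \<noteq> 0" using a0 by simp
  have Jc2: "(of_real J :: complex) = a * cnj a * of_real (1 - (cmod m)^2)"
    using J2 aa by simp
  have s0: "(of_real (1 - (cmod m)^2) :: complex) \<noteq> 0" using s by (metis less_irrefl of_real_eq_0_iff)
  show "of_real ((cmod c)^2 - (cmod d)^2) * X / (c + m * cnj d) = cnj c * X"
  proof -
    define T :: complex where "T = of_real J"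
    define t :: complex where "t = of_real (1 - (cmod m)^2)"
    have T: "T = a * cnj a * t" using Jc2 unfolding T_def t_def .
    have T0: "T \<noteq> 0" using Jne T_def by simp
    have t0: "t \<noteq> 0" using s0 t_def by simp
    have "of_real (1 / J) * X / (cnj a * t / T) = X / (cnj a * t)"
      using T0 t0 cna by (simp add: T_def field_simps)
    also have "\<dots> = a / T * X" using T0 t0 cna a0 unfolding T by (simp add: field_simps)
    finally show ?thesis unfolding nn K cc T_def t_def .
  qed
  show "(m*a + 0 * cnj a) / (a + 0 * cnj (m*a)) = m" using a0 by simp
  show "of_real J * (cnj c * X) / (a + 0 * cnj (m * a)) = X" unfolding cc using a0 Jne by simp
qed
theorem proposition6p1:
  fixes \<Omega> \<Omega>' :: "complex set" and \<mu> A B F \<Phi> :: "complex \<Rightarrow> complex"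
  assumes "is_domain \<Omega>" and "is_domain \<Omega>'"
    and "(\<mu>, A, B, F) \<in> BV \<Omega>"
    and "\<exists>k<1. \<forall>z\<in>\<Omega>. cmod (\<mu> z) \<le> k"
    and "diffeo \<Phi> \<Omega> \<Omega>'"
    and "\<forall>z\<in>\<Omega>. wirt_zbar \<Phi> z = \<mu> z * wirt_z \<Phi> z"
  shows "let \<Psi> = inv_into \<Omega> \<Phi> in
    diffeo \<Psi> \<Omega>' \<Omega> \<and>
    (case pullback \<Psi> (\<mu>, A, B, F) of (\<mu>', A', B', F') \<Rightarrow>
       (\<forall>\<zeta>\<in>\<Omega>'. \<mu>' \<zeta> = 0
          \<and> A' \<zeta> = cnj (wirt_z \<Psi> \<zeta>) * A (\<Psi> \<zeta>)
          \<and> B' \<zeta> = cnj (wirt_z \<Psi> \<zeta>) * B (\<Psi> \<zeta>)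
          \<and> F' \<zeta> = cnj (wirt_z \<Psi> \<zeta>) * F (\<Psi> \<zeta>))) \<and>
    pullback \<Psi> (\<mu>, A, B, F) \<in> BV \<Omega>' \<and>
    d_equiv \<Omega> (\<mu>, A, B, F) \<Omega>' (pullback \<Psi> (\<mu>, A, B, F))"
  proof -
  define \<Psi> where "\<Psi> = inv_into \<Omega> \<Phi>"
  have opO: "open \<Omega>" and opO': "open \<Omega>'" using assms(1,2) unfolding is_domain_def by auto
  have bij: "bij_betw \<Phi> \<Omega> \<Omega>'" and C1P: "C1_on \<Omega> \<Phi>" and C1Q: "C1_on \<Omega>' \<Psi>"
    and jac: "\<And>z. z \<in> \<Omega> \<Longrightarrow> jacobian \<Phi> z > 0"
    using assms(5) unfolding diffeo_def \<Psi>_def by auto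
  have left: "\<And>x. x \<in> \<Omega> \<Longrightarrow> \<Psi> (\<Phi> x) = x" using bij bij_betw_inv_into_left \<Psi>_def by metis
  have right: "\<And>y. y \<in> \<Omega>' \<Longrightarrow> \<Phi> (\<Psi> y) = y" using bij bij_betw_inv_into_right \<Psi>_def by metis
  have bijQ: "bij_betw \<Psi> \<Omega>' \<Omega>" using bij bij_betw_inv_into \<Psi>_def by metis
  have PsiIn: "\<And>y. y \<in> \<Omega>' \<Longrightarrow> \<Psi> y \<in> \<Omega>" using bijQ bij_betw_apply by metis
  have PhiIn: "\<And>x. x \<in> \<Omega> \<Longrightarrow> \<Phi> x \<in> \<Omega>'" using bij bij_betw_apply by metis
  have dP: "\<And>x. x \<in> \<Omega> \<Longrightarrow> \<Phi> differentiable at x" using C1P unfolding C1_on_def by blast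
  have dQ: "\<And>x. x \<in> \<Omega>' \<Longrightarrow> \<Psi> differentiable at x" using C1Q unfolding C1_on_def by blast
  have Jform: "jacobian \<Phi> z = (cmod (wirt_z \<Phi> z))^2 - (cmod (\<mu> z * wirt_z \<Phi> z))^2"
    if "z \<in> \<Omega>" for z using assms(6) that unfolding jacobian_def by simp
  have key: "wirt_z \<Psi> (\<Phi> z) = cnj (wirt_z \<Phi> z) / of_real (jacobian \<Phi> z)
     \<and> wirt_zbar \<Psi> (\<Phi> z) = - (\<mu> z * wirt_z \<Phi> z) / of_real (jacobian \<Phi> z)"
    if z: "z \<in> \<Omega>" for z
  proof -
    note iw = inv_wirt[OF opO z dP[OF z] dQ[OF PhiIn[OF z]] left]
    have J: "jacobian \<Phi> z = (cmod (wirt_z \<Phi> z))^2 - (cmod (wirt_zbar \<Phi> z))^2"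
      unfolding jacobian_def ..
    note sv = solve_inv[OF iw J jac[OF z]]
    show ?thesis using sv assms(6) z by simp
  qed
  note alg = alg_main[OF Jform jac key[THEN conjunct1] key[THEN conjunct2]]
  have jacQ: "jacobian \<Psi> (\<Phi> z) = 1 / jacobian \<Phi> z" if z: "z \<in> \<Omega>" for z
    using alg(2)[OF z z z z] unfolding jacobian_def .
  obtain \<mu>' A' B' F' where pb: "pullback \<Psi> (\<mu>, A, B, F) = (\<mu>', A', B', F')"
    by (metis prod_cases4)
  have pt: "\<mu>' \<zeta> = 0 \<and> A' \<zeta> = cnj (wirt_z \<Psi> \<zeta>) * A (\<Psi> \<zeta>)
          \<and> B' \<zeta> = cnj (wirt_z \<Psi> \<zeta>) * B (\<Psi> \<zeta>)
          \<and> F' \<zeta> = cnj (wirt_z \<Psi> \<zeta>) * F (\<Psi> \<zeta>)" if \<zeta>: "\<zeta> \<in> \<Omega>'" for \<zeta>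
  proof -
    define z where "z = \<Psi> \<zeta>"
    have z: "z \<in> \<Omega>" using PsiIn[OF \<zeta>] z_def by simp
    have ze: "\<zeta> = \<Phi> z" using right[OF \<zeta>] z_def by simp
    have lz: "\<Psi> (\<Phi> z) = z" using left[OF z] .
    have jQ: "jacobian \<Psi> (\<Phi> z) = (cmod (wirt_z \<Psi> (\<Phi> z)))^2 - (cmod (wirt_zbar \<Psi> (\<Phi> z)))^2"
      unfolding jacobian_def ..
    have comps: "\<mu>' = (\<lambda>\<zeta>. (wirt_zbar \<Psi> \<zeta> + \<mu> (\<Psi> \<zeta>) * cnj (wirt_z \<Psi> \<zeta>)) / (wirt_z \<Psi> \<zeta> + \<mu> (\<Psi> \<zeta>) * cnj (wirt_zbar \<Psi> \<zeta>)))"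
      "A' = (\<lambda>\<zeta>. of_real (jacobian \<Psi> \<zeta>) * A (\<Psi> \<zeta>) / (wirt_z \<Psi> \<zeta> + \<mu> (\<Psi> \<zeta>) * cnj (wirt_zbar \<Psi> \<zeta>)))"
      "B' = (\<lambda>\<zeta>. of_real (jacobian \<Psi> \<zeta>) * B (\<Psi> \<zeta>) / (wirt_z \<Psi> \<zeta> + \<mu> (\<Psi> \<zeta>) * cnj (wirt_zbar \<Psi> \<zeta>)))"
      "F' = (\<lambda>\<zeta>. of_real (jacobian \<Psi> \<zeta>) * F (\<Psi> \<zeta>) / (wirt_z \<Psi> \<zeta> + \<mu> (\<Psi> \<zeta>) * cnj (wirt_zbar \<Psi> \<zeta>)))"
      using pb unfolding pullback_def Let_def by auto
    show ?thesis unfolding comps ze lz jQ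
      using alg(1)[OF z z z z] alg(3)[OF z z z z] by simp
  qed
  have diffQ: "diffeo \<Psi> \<Omega>' \<Omega>"
    unfolding diffeo_def
  proof (intro conjI ballI)
    show "bij_betw \<Psi> \<Omega>' \<Omega>" by (rule bijQ)
    show "C1_on \<Omega>' \<Psi>" by (rule C1Q)
    show "C1_on \<Omega> (inv_into \<Omega>' \<Psi>)"
      using C1_cong[OF opO _ C1P] inv_into_inv_into_eq[OF bij] unfolding \<Psi>_def by metis
    fix \<zeta> assume \<zeta>: "\<zeta> \<in> \<Omega>'"
    have z: "\<Psi> \<zeta> \<in> \<Omega>" by (rule PsiIn[OF \<zeta>])
    show "jacobian \<Psi> \<zeta> > 0" using jacQ[OF z] jac[OF z] right[OF \<zeta>] by simp
  qed
  have contQ: "continuous_on \<Omega>' \<Psi>"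
    by (rule differentiable_imp_continuous_on) (simp add: differentiable_at_imp_differentiable_on dQ)
  have img: "\<Psi> ` \<Omega>' \<subseteq> \<Omega>" using PsiIn by blast
  have cwz: "continuous_on \<Omega>' (\<lambda>\<zeta>. cnj (wirt_z \<Psi> \<zeta>))"
    using C1Q unfolding C1_on_def by (intro continuous_on_cnj) blast
  have BV0: "continuous_on \<Omega> A" "continuous_on \<Omega> B" "continuous_on \<Omega> F"
    using assms(3) unfolding BV_def by auto
  have cc: "continuous_on \<Omega>' (\<lambda>\<zeta>. cnj (wirt_z \<Psi> \<zeta>) * G (\<Psi> \<zeta>))" if "continuous_on \<Omega> G" for G
    by (intro continuous_on_mult cwz continuous_on_compose2[OF that contQ img])
  have inBV: "(\<mu>', A', B', F') \<in> BV \<Omega>'"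
    unfolding BV_def
  proof (clarsimp, intro conjI ballI)
    show "continuous_on \<Omega>' \<mu>'"
      using continuous_on_cong[of \<Omega>' \<Omega>' \<mu>' "\<lambda>_. 0"] pt by simp
    show "continuous_on \<Omega>' A'"
      using continuous_on_cong[of \<Omega>' \<Omega>' A'] pt cc[OF BV0(1)] by simp
    show "continuous_on \<Omega>' B'"
      using continuous_on_cong[of \<Omega>' \<Omega>' B'] pt cc[OF BV0(2)] by simp
    show "continuous_on \<Omega>' F'"
      using continuous_on_cong[of \<Omega>' \<Omega>' F'] pt cc[OF BV0(3)] by simp
    fix \<zeta> assume "\<zeta> \<in> \<Omega>'" then show "cmod (\<mu>' \<zeta>) < 1" using pt by simp
  qed
  have deq: "data_eq_on \<Omega> (\<mu>, A, B, F) (pullback \<Phi> (\<mu>', A', B', F'))"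
    unfolding data_eq_on_def pullback_def Let_def
  proof (clarsimp, intro conjI)
    fix z assume z: "z \<in> \<Omega>"
    note p = pt[OF PhiIn[OF z]]
    have lz: "\<Psi> (\<Phi> z) = z" using left[OF z] .
    show "\<mu> z = (wirt_zbar \<Phi> z + \<mu>' (\<Phi> z) * cnj (wirt_z \<Phi> z)) / (wirt_z \<Phi> z + \<mu>' (\<Phi> z) * cnj (wirt_zbar \<Phi> z))"
      using alg(4)[OF z z z z] p assms(6) z by simp
    show "A z = complex_of_real (jacobian \<Phi> z) * A' (\<Phi> z) / (wirt_z \<Phi> z + \<mu>' (\<Phi> z) * cnj (wirt_zbar \<Phi> z))"
      using alg(5)[OF z z z z, of "A z"] p assms(6) z lz by simp
    show "B z = complex_of_real (jacobian \<Phi> z) * B' (\<Phi> z) / (wirt_z \<Phi> z + \<mu>' (\<Phi> z) * cnj (wirt_zbar \<Phi> z))"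
      using alg(5)[OF z z z z, of "B z"] p assms(6) z lz by simp
    show "F z = complex_of_real (jacobian \<Phi> z) * F' (\<Phi> z) / (wirt_z \<Phi> z + \<mu>' (\<Phi> z) * cnj (wirt_zbar \<Phi> z))"
      using alg(5)[OF z z z z, of "F z"] p assms(6) z lz by simp
  qed
  have deqv: "d_equiv \<Omega> (\<mu>, A, B, F) \<Omega>' (\<mu>', A', B', F')"
    unfolding d_equiv_def using assms(5) deq by blast
  have c2: "\<forall>\<zeta>\<in>\<Omega>'. \<mu>' \<zeta> = 0 \<and> A' \<zeta> = cnj (wirt_z \<Psi> \<zeta>) * A (\<Psi> \<zeta>)
          \<and> B' \<zeta> = cnj (wirt_z \<Psi> \<zeta>) * B (\<Psi> \<zeta>)
          \<and> F' \<zeta> = cnj (wirt_z \<Psi> \<zeta>) * F (\<Psi> \<zeta>)" using pt by blast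
  show ?thesis unfolding Let_def \<Psi>_def[symmetric] pb prod.case
    using diffQ c2 inBV deqv by blast
qed

end
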